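(* Let $X,Y$ be q-cycle sets and $p:X\to Y$ an epimorphism. If $X$ is irreducible, then $Y$ is irreducible.
   Context: A q-cycle set is a non-empty set $X$ with operations $\cdot,:$ such that each $y\mapsto x\cdot y$ is bijective and $(x\cdot y)\cdot(x\cdot z)=(y:x)\cdot(y\cdot z)$, $(x:y):(x:z)=(y\cdot x):(y:z)$, $(x\cdot y):(x\cdot z)=(y:x)\cdot(y:z)$ for all $x,y,z$. An epimorphism is a surjective map $p$ with $p(a\cdot b)=p(a)\cdot p(b)$ and $p(a:b)=p(a):p(b)$. A sub-q-cycle set is a subset that is a q-cycle set under the restricted operations (the empty set also counts); a q-cycle set is irreducible if $\emptyset$ and itself are its only sub-q-cycle sets. *)

theory Defs
  imports Main
begin

definition qcycle_set :: "'a set \<Rightarrow> ('a \<Rightarrow> 'a \<Rightarrow> 'a) \<Rightarrow> ('a \<Rightarrow> 'a \<Rightarrow> 'a) \<Rightarrow> bool" where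
  "qcycle_set X dot col \<longleftrightarrow>
     X \<noteq> {} \<and>
     (\<forall>x\<in>X. \<forall>y\<in>X. dot x y \<in> X \<and> col x y \<in> X) \<and>
     (\<forall>x\<in>X. bij_betw (dot x) X X) \<and>
     (\<forall>x\<in>X. \<forall>y\<in>X. \<forall>z\<in>X.
        dot (dot x y) (dot x z) = dot (col y x) (dot y z) \<and>
        col (col x y) (col x z) = col (dot y x) (col y z) \<and>
        col (dot x y) (dot x z) = dot (col y x) (col y z))"

definition sub_qcycle_set :: "'a set \<Rightarrow> 'a set \<Rightarrow> ('a \<Rightarrow> 'a \<Rightarrow> 'a) \<Rightarrow> ('a \<Rightarrow> 'a \<Rightarrow> 'a) \<Rightarrow> bool" where
  "sub_qcycle_set S X dot col \<longleftrightarrow> S \<subseteq> X \<and> (S = {} \<or> qcycle_set S dot col)"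

definition irreducible_qcycle_set :: "'a set \<Rightarrow> ('a \<Rightarrow> 'a \<Rightarrow> 'a) \<Rightarrow> ('a \<Rightarrow> 'a \<Rightarrow> 'a) \<Rightarrow> bool" where
  "irreducible_qcycle_set X dot col \<longleftrightarrow>
     qcycle_set X dot col \<and> (\<forall>S. sub_qcycle_set S X dot col \<longrightarrow> S = {} \<or> S = X)"

definition qcycle_epi ::
  "('a \<Rightarrow> 'b) \<Rightarrow> 'a set \<Rightarrow> ('a \<Rightarrow> 'a \<Rightarrow> 'a) \<Rightarrow> ('a \<Rightarrow> 'a \<Rightarrow> 'a)
     \<Rightarrow> 'b set \<Rightarrow> ('b \<Rightarrow> 'b \<Rightarrow> 'b) \<Rightarrow> ('b \<Rightarrow> 'b \<Rightarrow> 'b) \<Rightarrow> bool" where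
  "qcycle_epi p X dotX colX Y dotY colY \<longleftrightarrow>
     p ` X = Y \<and>
     (\<forall>a\<in>X. \<forall>b\<in>X. p (dotX a b) = dotY (p a) (p b) \<and> p (colX a b) = colY (p a) (p b))"

end

theory Submission
  imports Defs
begin

theorem mainTheorem15:
  fixes X :: "'a set" and dotX colX :: "'a \<Rightarrow> 'a \<Rightarrow> 'a"
    and Y :: "'b set" and dotY colY :: "'b \<Rightarrow> 'b \<Rightarrow> 'b"
    and p :: "'a \<Rightarrow> 'b"
  assumes "qcycle_set X dotX colX"
    and "qcycle_set Y dotY colY"
    and "qcycle_epi p X dotX colX Y dotY colY"
    and "irreducible_qcycle_set X dotX colX"
  shows "irreducible_qcycle_set Y dotY colY"
proof -
  have X: "qcycle_set X dotX colX" by fact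
  have Y: "qcycle_set Y dotY colY" by fact
  have pY: "p ` X = Y" and hom: "\<And>a b. a\<in>X \<Longrightarrow> b\<in>X \<Longrightarrow> p (dotX a b) = dotY (p a) (p b) \<and> p (colX a b) = colY (p a) (p b)"
    using assms(3) unfolding qcycle_epi_def by auto
  have irr: "\<And>T. sub_qcycle_set T X dotX colX \<Longrightarrow> T = {} \<or> T = X"
    using assms(4) unfolding irreducible_qcycle_set_def by auto
  have Xc: "\<And>x y. x\<in>X \<Longrightarrow> y\<in>X \<Longrightarrow> dotX x y \<in> X \<and> colX x y \<in> X"
   and Xb: "\<And>x. x\<in>X \<Longrightarrow> bij_betw (dotX x) X X"
    using X unfolding qcycle_set_def by auto
  have Yb: "\<And>x. x\<in>Y \<Longrightarrow> bij_betw (dotY x) Y Y"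
    using Y unfolding qcycle_set_def by auto
  have "S = {} \<or> S = Y" if S: "sub_qcycle_set S Y dotY colY" for S
  proof (cases "S = {}")
    case True then show ?thesis by simp
  next
    case False
    with S have SY: "S \<subseteq> Y" and Sq: "qcycle_set S dotY colY"
      unfolding sub_qcycle_set_def by auto
    have Sc: "\<And>x y. x\<in>S \<Longrightarrow> y\<in>S \<Longrightarrow> dotY x y \<in> S \<and> colY x y \<in> S"
     and Sb: "\<And>x. x\<in>S \<Longrightarrow> bij_betw (dotY x) S S"
      using Sq unfolding qcycle_set_def by auto
    define T where "T = {x\<in>X. p x \<in> S}"
    have TX: "T \<subseteq> X" unfolding T_def by auto
    have Tne: "T \<noteq> {}"
    proof -
      obtain s where "s \<in> S" using False by auto
      then obtain x where "x \<in> X" "p x = s" using SY pY by blast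
      then show ?thesis unfolding T_def using \<open>s\<in>S\<close> by auto
    qed
    have Tc: "\<forall>x\<in>T. \<forall>y\<in>T. dotX x y \<in> T \<and> colX x y \<in> T"
      unfolding T_def using Xc hom Sc by auto
    have Tb: "bij_betw (dotX x) T T" if xT: "x \<in> T" for x
    proof -
      have xX: "x \<in> X" and pxS: "p x \<in> S" using xT unfolding T_def by auto
      have inj: "inj_on (dotX x) T" using Xb[OF xX] TX bij_betw_imp_inj_on inj_on_subset by blast
      have "T \<subseteq> dotX x ` T"
      proof
        fix z assume zT: "z \<in> T"
        hence zX: "z \<in> X" and pzS: "p z \<in> S" unfolding T_def by auto
        obtain w where wX: "w \<in> X" and zw: "z = dotX x w"
          using Xb[OF xX] zX unfolding bij_betw_def by auto
        have pw: "p z = dotY (p x) (p w)" using hom[OF xX wX] zw by simp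
        obtain s where sS: "s \<in> S" and ps: "dotY (p x) s = p z"
          using Sb[OF pxS] pzS unfolding bij_betw_def by (metis imageE)
        have "p w \<in> Y" using pY wX by auto
        moreover have "s \<in> Y" using sS SY by auto
        moreover have "p x \<in> Y" using pxS SY by auto
        ultimately have "p w = s" using Yb[of "p x"] pw ps unfolding bij_betw_def inj_on_def by metis
        hence "w \<in> T" unfolding T_def using wX sS by auto
        thus "z \<in> dotX x ` T" using zw by auto
      qed
      moreover have "dotX x ` T \<subseteq> T" using Tc xT by auto
      ultimately show ?thesis using inj unfolding bij_betw_def by auto
    qed
    have "qcycle_set T dotX colX"
      unfolding qcycle_set_def using Tne Tc Tb X TX unfolding qcycle_set_def by blast
    hence "sub_qcycle_set T X dotX colX" unfolding sub_qcycle_set_def using TX by auto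
    hence "T = X" using irr Tne by auto
    hence "Y \<subseteq> S" using pY unfolding T_def by auto
    thus ?thesis using SY by auto
  qed
  thus ?thesis unfolding irreducible_qcycle_set_def using Y by auto
qed

end
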